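(* Let $0<\alpha<1$ and $\gamma>0$, and for $j\in\mathbb{Z}_{\ge0}$ let $F_j={}_2F_1(\gamma,j\gamma;1+j\gamma;\alpha)$. Then (1) $F_0=1$; (2) $F_{j+1}>F_j$ for all $j\ge0$; (3) $F_j<(1-\alpha)^{-\gamma}$ for all $j\ge0$.
   Context: ${}_2F_1(a,b;c;z)=\sum_{k\ge0}\frac{(a)_k(b)_k}{k!(c)_k}z^k$ is the Gauss hypergeometric function, $(a)_k$ the Pochhammer symbol. *)

theory Defs
  imports "HOL-Analysis.Analysis"
begin

definition hyp2F1 :: "real \<Rightarrow> real \<Rightarrow> real \<Rightarrow> real \<Rightarrow> real" where
  "hyp2F1 a b c z =
     (\<Sum>k. pochhammer a k * pochhammer b k / (fact k * pochhammer c k) * z ^ k)"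

end

theory Submission
  imports Defs
begin

lemma poch_ratio:
  fixes b :: real and k :: nat
  assumes "b \<ge> 0" "k > 0"
  shows "pochhammer b k / pochhammer (1 + b) k = b / (b + real k)"
proof -
  have "pochhammer b (Suc k) = b * pochhammer (b+1) k" by (rule pochhammer_rec)
  moreover have "pochhammer b (Suc k) = (b + real k) * pochhammer b k" by (rule pochhammer_rec')
  moreover have "pochhammer (1 + b) k > 0" using assms by (intro pochhammer_pos) auto
  moreover have "b + real k > 0" using assms by simp
  ultimately show ?thesis by (simp add: field_simps add.commute)
qed

lemma ratio_mono:
  fixes a c :: real
  assumes "0 \<le> a" "a < c" "k > 0"
  shows "a / (a + real k) < c / (c + real k)"
  using assms by (simp add: field_simps)

theorem mainTheorem5:
  fixes \<alpha> \<gamma> :: real and F :: "nat \<Rightarrow> real"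
  assumes "0 < \<alpha>" and "\<alpha> < 1" and "0 < \<gamma>"
    and "\<And>j. F j = hyp2F1 \<gamma> (real j * \<gamma>) (1 + real j * \<gamma>) \<alpha>"
  shows "F 0 = 1 \<and> (\<forall>j. F (Suc j) > F j) \<and> (\<forall>j. F j < (1 - \<alpha>) powr (- \<gamma>))"
proof -
  define b where "b k = pochhammer \<gamma> k / fact k * \<alpha> ^ k" for k
  define q where "q j k = (if k = 0 then 1 else real j * \<gamma> / (real j * \<gamma> + real k))" for j k :: nat
  define t where "t j k = pochhammer \<gamma> k * pochhammer (real j * \<gamma>) k /
        (fact k * pochhammer (1 + real j * \<gamma>) k) * \<alpha> ^ k" for j k :: nat
  have Ft: "F j = suminf (t j)" for j using assms(4) unfolding hyp2F1_def t_def by simp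
  have bpos: "b k > 0" for k unfolding b_def using assms by (simp add: pochhammer_pos)
  have tq: "t j k = b k * q j k" for j k
  proof (cases "k = 0")
    case True then show ?thesis by (simp add: t_def b_def q_def)
  next
    case False
    have "pochhammer (real j * \<gamma>) k / pochhammer (1 + real j * \<gamma>) k = q j k"
      using poch_ratio[of "real j * \<gamma>" k] False assms(3) by (simp add: q_def)
    moreover have "t j k = b k * (pochhammer (real j * \<gamma>) k / pochhammer (1 + real j * \<gamma>) k)"
      unfolding t_def b_def by simp
    ultimately show ?thesis by simp
  qed
  have q0: "0 \<le> q j k" for j k using assms(3) by (simp add: q_def)
  have q1: "q j k \<le> 1" for j k
  proof -
    have "0 \<le> real j * \<gamma>" using assms(3) by simp
    then show ?thesis by (auto simp: q_def divide_le_eq_1 add_nonneg_pos)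
  qed
  have qmono: "q j k \<le> q (Suc j) k" for j k
    using ratio_mono[of "real j * \<gamma>" "real (Suc j) * \<gamma>" k] assms(3)
    by (cases "k = 0") (auto simp: q_def distrib_right)
  have qmono1: "q j 1 < q (Suc j) 1" for j
    using ratio_mono[of "real j * \<gamma>" "real (Suc j) * \<gamma>" 1] assms(3)
    by (auto simp: q_def distrib_right)
  have q11: "q j 1 < 1" for j
  proof -
    have "0 \<le> real j * \<gamma>" using assms(3) by simp
    then show ?thesis by (simp add: q_def)
  qed
  have bsums: "b sums (1 - \<alpha>) powr (- \<gamma>)"
  proof -
    have "\<bar>- \<alpha>\<bar> < 1" using assms by simp
    from gen_binomial_real[OF this, of "-\<gamma>"]
    have "(\<lambda>n. (- \<gamma> gchoose n) * (- \<alpha>) ^ n) sums (1 - \<alpha>) powr (- \<gamma>)" by simp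
    moreover have "(- \<gamma> gchoose n) * (- \<alpha>) ^ n = b n" for n
    proof -
      have "(- \<gamma> gchoose n) * (- \<alpha>) ^ n = ((- 1) ^ n * (- 1) ^ n) * (pochhammer \<gamma> n / fact n * \<alpha> ^ n)"
        by (simp add: gbinomial_pochhammer power_minus[of \<alpha>])
      also have "(- 1 :: real) ^ n * (- 1) ^ n = 1" by (simp flip: power_add)
      finally show ?thesis by (simp add: b_def)
    qed
    ultimately show ?thesis by simp
  qed
  have bsum: "summable b" using bsums by (rule sums_summable)
  have tsum: "summable (t j)" for j
    by (rule summable_comparison_test[OF _ bsum])
       (auto intro!: exI[of _ 0] simp: tq abs_mult q0 bpos less_imp_le
             intro: mult_left_le[of _ "b _"] q1)
  have part1: "F 0 = 1"
  proof -
    have "t 0 = (\<lambda>k. if k = 0 then 1 else 0)"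
      by (auto simp: fun_eq_iff tq q_def b_def)
    then have "t 0 sums 1" using sums_single[of 0 "\<lambda>_. 1::real"] by simp
    then show ?thesis using Ft sums_unique by metis
  qed
  have part2: "F (Suc j) > F j" for j
  proof -
    have "0 < suminf (\<lambda>k. t (Suc j) k - t j k)"
    proof (rule suminf_pos2[where i=1])
      show "summable (\<lambda>k. t (Suc j) k - t j k)" by (intro summable_diff tsum)
      show "0 \<le> t (Suc j) k - t j k" for k
        using qmono[of j k] bpos[of k] by (simp add: tq mult_left_mono less_imp_le)
      show "0 < t (Suc j) 1 - t j 1"
        using qmono1[of j] bpos[of 1] by (simp add: tq mult_strict_left_mono del: One_nat_def)
    qed
    also have "\<dots> = F (Suc j) - F j" using Ft suminf_diff[OF tsum tsum] by simp
    finally show ?thesis by simp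
  qed
  have part3: "F j < (1 - \<alpha>) powr (- \<gamma>)" for j
  proof -
    have "0 < suminf (\<lambda>k. b k - t j k)"
    proof (rule suminf_pos2[where i=1])
      show "summable (\<lambda>k. b k - t j k)" by (intro summable_diff tsum bsum)
      show "0 \<le> b k - t j k" for k
        using q1[of j k] bpos[of k] by (simp add: tq mult_left_le less_imp_le)
      show "0 < b 1 - t j 1"
        using q11[of j] bpos[of 1] by (simp add: tq mult_less_cancel_left1 del: One_nat_def)
    qed
    also have "\<dots> = (1 - \<alpha>) powr (- \<gamma>) - F j"
      using Ft suminf_diff[OF bsum tsum] sums_unique[OF bsums] by simp
    finally show ?thesis by simp
  qed
  show ?thesis using part1 part2 part3 by blast
qed

end
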